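(* Let $X$ be a compact topological space, $B\subseteq\mathbb{R}^X$ an $\mathbb{R}$-subalgebra consisting of continuous functions on $X$, and $Q\subseteq B$ a quadratic module with $K_{Q,X}=X$ and $\overline{m(X)}=K_{Q,Y_B}$. Let $q\in B$ satisfy $\{x\in X\mid q(x)=0\}\subseteq\overline{\{x\in X\mid q(x)<0\}}$ (closure in $X$). Let $f=\chi_{\{q\ge0\}}$, $A=B[f]\subseteq\mathbb{R}^X$, and let $Q'$ be the quadratic module of $A$ generated by $Q$ and $qf$, $q(f-1)$. Then $K_{Q',X}=X$ and $\overline{m(X)}=K_{Q',Y_A}$.
   Context: A quadratic module of a commutative unital $\mathbb{R}$-algebra $C$ is a subset $Q\subseteq C$ with $Q+Q\subseteq Q$, $c^2Q\subseteq Q$ for all $c\in C$, and $1\in Q$. For an $\mathbb{R}$-subalgebra $C\subseteq\mathbb{R}^X$ and a quadratic module $Q$ of $C$: $K_{Q,X}:=\{x\in X\mid g(x)\ge0\ \forall g\in Q\}$; $Y_C$ is the set of unital $\mathbb{R}$-algebra homomorphisms $C\to\mathbb{R}$, with the weakest topology making all maps $y\mapsto y(c)$ continuous; $K_{Q,Y_C}:=\{y\in Y_C\mid y(g)\ge0\ \forall g\in Q\}$; $m\colon X\to Y_C$, $m(x)(c)=c(x)$; $\overline{m(X)}$ is the closure in $Y_C$. $\chi_S$ is the characteristic function of $S$, and $\{q\ge0\}=\{x\in X\mid q(x)\ge0\}$. *)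

theory Defs
  imports "HOL-Analysis.Analysis"
begin

definition subalgebra :: "('a \<Rightarrow> real) set \<Rightarrow> bool" where
  "subalgebra C \<longleftrightarrow> (\<forall>r::real. (\<lambda>_. r) \<in> C) \<and>
     (\<forall>a\<in>C. \<forall>b\<in>C. (\<lambda>x. a x + b x) \<in> C \<and> (\<lambda>x. a x * b x) \<in> C) \<and>
     (\<forall>r::real. \<forall>a\<in>C. (\<lambda>x. r * a x) \<in> C)"

text \<open>The R-subalgebra generated by a set S of functions (e.g. B[f] = generated by insert f B).\<close>
definition alg_generated :: "('a \<Rightarrow> real) set \<Rightarrow> ('a \<Rightarrow> real) set" where
  "alg_generated S = \<Inter>{C. subalgebra C \<and> S \<subseteq> C}"

definition quadratic_module :: "('a \<Rightarrow> real) set \<Rightarrow> ('a \<Rightarrow> real) set \<Rightarrow> bool" where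
  "quadratic_module C Q \<longleftrightarrow> Q \<subseteq> C \<and>
     (\<forall>g\<in>Q. \<forall>h\<in>Q. (\<lambda>x. g x + h x) \<in> Q) \<and>
     (\<forall>c\<in>C. \<forall>g\<in>Q. (\<lambda>x. (c x)\<^sup>2 * g x) \<in> Q) \<and>
     (\<lambda>_. 1) \<in> Q"

definition qm_generated :: "('a \<Rightarrow> real) set \<Rightarrow> ('a \<Rightarrow> real) set \<Rightarrow> ('a \<Rightarrow> real) set" where
  "qm_generated C G = \<Inter>{Q. quadratic_module C Q \<and> G \<subseteq> Q}"

definition K_X :: "('a \<Rightarrow> real) set \<Rightarrow> 'a set" where
  "K_X Q = {x. \<forall>g\<in>Q. g x \<ge> 0}"

text \<open>Y_C: unital R-algebra homomorphisms C -> R, represented as functions on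
  R^X that are extensional (undefined) outside C.\<close>
definition Y :: "('a \<Rightarrow> real) set \<Rightarrow> (('a \<Rightarrow> real) \<Rightarrow> real) set" where
  "Y C = {y. y \<in> extensional C \<and> y (\<lambda>_. 1) = 1 \<and>
     (\<forall>a\<in>C. \<forall>b\<in>C. y (\<lambda>x. a x + b x) = y a + y b \<and> y (\<lambda>x. a x * b x) = y a * y b) \<and>
     (\<forall>r::real. \<forall>a\<in>C. y (\<lambda>x. r * a x) = r * y a)}"

definition Ytop :: "('a \<Rightarrow> real) set \<Rightarrow> (('a \<Rightarrow> real) \<Rightarrow> real) topology" where
  "Ytop C = topology_generated_by {{y \<in> Y C. y c \<in> U} | c U. c \<in> C \<and> open U}"

definition K_Y :: "('a \<Rightarrow> real) set \<Rightarrow> ('a \<Rightarrow> real) set \<Rightarrow> (('a \<Rightarrow> real) \<Rightarrow> real) set" where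
  "K_Y C Q = {y \<in> Y C. \<forall>g\<in>Q. y g \<ge> 0}"

definition m :: "('a \<Rightarrow> real) set \<Rightarrow> 'a \<Rightarrow> (('a \<Rightarrow> real) \<Rightarrow> real)" where
  "m C x = restrict (\<lambda>c. c x) C"

end

theory Submission
  imports Defs
begin

lemma subalg_const: "subalgebra C \<Longrightarrow> (\<lambda>_. r) \<in> C"
  unfolding subalgebra_def by blast
lemma subalg_add: "subalgebra C \<Longrightarrow> a \<in> C \<Longrightarrow> b \<in> C \<Longrightarrow> (\<lambda>x. a x + b x) \<in> C"
  unfolding subalgebra_def by blast
lemma subalg_mult: "subalgebra C \<Longrightarrow> a \<in> C \<Longrightarrow> b \<in> C \<Longrightarrow> (\<lambda>x. a x * b x) \<in> C"
  unfolding subalgebra_def by blast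
lemma subalg_scal: "subalgebra C \<Longrightarrow> a \<in> C \<Longrightarrow> (\<lambda>x. r * a x) \<in> C"
  unfolding subalgebra_def by blast

lemma subalg_sq: "subalgebra C \<Longrightarrow> c \<in> C \<Longrightarrow> g \<in> C \<Longrightarrow> (\<lambda>x. (c x)\<^sup>2 * g x) \<in> C"
proof -
  assume s: "subalgebra C" and c: "c \<in> C" and g: "g \<in> C"
  have "(\<lambda>x. (\<lambda>x. c x * c x) x * g x) \<in> C" by (rule subalg_mult[OF s subalg_mult[OF s c c] g])
  then show ?thesis by (simp add: power2_eq_square)
qed

lemma closure_ofD: "x \<in> X closure_of S \<Longrightarrow> x \<in> T \<Longrightarrow> openin X T \<Longrightarrow> \<exists>y\<in>S. y \<in> T"
  unfolding closure_of_def by blast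

lemma closure_of_top: "x \<in> X closure_of S \<Longrightarrow> x \<in> topspace X"
  unfolding closure_of_def by blast

lemma alg_gen_sub: "subalgebra (alg_generated S)"
  unfolding alg_generated_def subalgebra_def by auto
lemma alg_gen_sup: "S \<subseteq> alg_generated S"
  unfolding alg_generated_def by auto
lemma alg_gen_least: "subalgebra C \<Longrightarrow> S \<subseteq> C \<Longrightarrow> alg_generated S \<subseteq> C"
  unfolding alg_generated_def by auto

lemma qm_gen_least: "quadratic_module C P \<Longrightarrow> G \<subseteq> P \<Longrightarrow> qm_generated C G \<subseteq> P"
  unfolding qm_generated_def by auto
lemma qm_gen_sup: "G \<subseteq> qm_generated C G"
  unfolding qm_generated_def by auto

lemma subalg_qm: "subalgebra C \<Longrightarrow> quadratic_module C C"
  unfolding quadratic_module_def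
  by (auto intro: subalg_add subalg_mult subalg_const simp: power2_eq_square)

lemma Y_one: "y \<in> Y C \<Longrightarrow> y (\<lambda>_. 1) = 1" unfolding Y_def by blast
lemma Y_add: "y \<in> Y C \<Longrightarrow> a \<in> C \<Longrightarrow> b \<in> C \<Longrightarrow> y (\<lambda>x. a x + b x) = y a + y b"
  unfolding Y_def by blast
lemma Y_mult: "y \<in> Y C \<Longrightarrow> a \<in> C \<Longrightarrow> b \<in> C \<Longrightarrow> y (\<lambda>x. a x * b x) = y a * y b"
  unfolding Y_def by blast
lemma Y_scal: "y \<in> Y C \<Longrightarrow> a \<in> C \<Longrightarrow> y (\<lambda>x. r * a x) = r * y a"
  unfolding Y_def by blast
lemma Y_const: "y \<in> Y C \<Longrightarrow> subalgebra C \<Longrightarrow> y (\<lambda>_. r) = r"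
proof -
  assume y: "y \<in> Y C" and s: "subalgebra C"
  have "y (\<lambda>x. r * (\<lambda>_. 1) x) = r * y (\<lambda>_. 1)"
    by (rule Y_scal[OF y subalg_const[OF s]])
  then show ?thesis using Y_one[OF y] by simp
qed

lemma m_in_Y: "subalgebra C \<Longrightarrow> m C x \<in> Y C"
  unfolding Y_def m_def using subalg_const[of C 1]
  by (auto intro: subalg_add subalg_mult subalg_scal)
lemma m_eval: "c \<in> C \<Longrightarrow> m C x c = c x"
  unfolding m_def by simp

lemma Ytop_topspace: "subalgebra C \<Longrightarrow> topspace (Ytop C) = Y C"
proof -
  assume s: "subalgebra C"
  have "Y C \<in> {{y \<in> Y C. y c \<in> U} | c U. c \<in> C \<and> open U}"
    using subalg_const[OF s, of 1] by (intro CollectI exI[of _ "\<lambda>_. 1"] exI[of _ UNIV]) auto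
  then show ?thesis unfolding Ytop_def by auto
qed

lemma Ytop_basic: "c \<in> C \<Longrightarrow> open U \<Longrightarrow> openin (Ytop C) {y \<in> Y C. y c \<in> U}"
  unfolding Ytop_def openin_topology_generated_by_iff
  by (rule generate_topology_on.Basis) blast

lemma Ytop_finite:
  assumes s: "subalgebra C" and "finite F" and "F \<subseteq> C"
  shows "openin (Ytop C) {z \<in> Y C. \<forall>c\<in>F. \<bar>z c - v c\<bar> < e}"
  using assms(2,3)
proof (induction F rule: finite_induct)
  case empty
  then show ?case using openin_topspace[of "Ytop C"] Ytop_topspace[OF s] by simp
next
  case (insert c F)
  have eq: "{z \<in> Y C. \<forall>c\<in>insert c F. \<bar>z c - v c\<bar> < e} =
        {z \<in> Y C. z c \<in> ball (v c) e} \<inter> {z \<in> Y C. \<forall>c\<in>F. \<bar>z c - v c\<bar> < e}"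
    by (auto simp: dist_real_def abs_minus_commute)
  have o1: "openin (Ytop C) {z \<in> Y C. z c \<in> ball (v c) e}"
    using insert(4) by (intro Ytop_basic) auto
  have o2: "openin (Ytop C) {z \<in> Y C. \<forall>c\<in>F. \<bar>z c - v c\<bar> < e}"
    using insert(3,4) by simp
  show ?case unfolding eq by (rule openin_Int[OF o1 o2])
qed

lemma Ytop_nbhd:
  assumes "openin (Ytop C) T" and "y \<in> T"
  shows "\<exists>F e. finite F \<and> F \<subseteq> C \<and> e > 0 \<and> {z \<in> Y C. \<forall>c\<in>F. \<bar>z c - y c\<bar> < e} \<subseteq> T"
proof -
  have g: "generate_topology_on {{y \<in> Y C. y c \<in> U} | c U. c \<in> C \<and> open U} T"
    using assms(1) unfolding Ytop_def openin_topology_generated_by_iff .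
  show ?thesis using g assms(2)
  proof (induction arbitrary: y rule: generate_topology_on.induct)
    case Empty
    then show ?case by simp
  next
    case (Int a b)
    have ya: "y \<in> a" and yb: "y \<in> b" using Int.prems by auto
    obtain F1 e1 where 1: "finite F1" "F1 \<subseteq> C" "e1 > 0" "{z \<in> Y C. \<forall>c\<in>F1. \<bar>z c - y c\<bar> < e1} \<subseteq> a"
      using Int.IH(1)[OF ya] by blast
    obtain F2 e2 where 2: "finite F2" "F2 \<subseteq> C" "e2 > 0" "{z \<in> Y C. \<forall>c\<in>F2. \<bar>z c - y c\<bar> < e2} \<subseteq> b"
      using Int.IH(2)[OF yb] by blast
    have "{z \<in> Y C. \<forall>c\<in>F1 \<union> F2. \<bar>z c - y c\<bar> < min e1 e2} \<subseteq> a \<inter> b"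
    proof
      fix z assume z: "z \<in> {z \<in> Y C. \<forall>c\<in>F1 \<union> F2. \<bar>z c - y c\<bar> < min e1 e2}"
      then have "z \<in> {z \<in> Y C. \<forall>c\<in>F1. \<bar>z c - y c\<bar> < e1}" by auto
      moreover have "z \<in> {z \<in> Y C. \<forall>c\<in>F2. \<bar>z c - y c\<bar> < e2}" using z by auto
      ultimately show "z \<in> a \<inter> b" using 1(4) 2(4) by blast
    qed
    moreover have "finite (F1 \<union> F2)" "F1 \<union> F2 \<subseteq> C" "min e1 e2 > 0" using 1 2 by auto
    ultimately show ?case by blast
  next
    case (UN K)
    then obtain k where k: "k \<in> K" "y \<in> k" by blast
    obtain F e where Fe: "finite F" "F \<subseteq> C" "e > 0" "{z \<in> Y C. \<forall>c\<in>F. \<bar>z c - y c\<bar> < e} \<subseteq> k"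
      using UN.IH[OF k] by blast
    have "{z \<in> Y C. \<forall>c\<in>F. \<bar>z c - y c\<bar> < e} \<subseteq> \<Union>K" using Fe(4) k(1) by blast
    then show ?case using Fe(1-3) by blast
  next
    case (Basis s)
    then obtain c U where s: "s = {y \<in> Y C. y c \<in> U}" "c \<in> C" "open U" by blast
    have "y c \<in> U" using Basis.prems s(1) by blast
    then obtain e where e: "e > 0" "ball (y c) e \<subseteq> U" using open_contains_ball s(3) by blast
    have "{z \<in> Y C. \<forall>c'\<in>{c}. \<bar>z c' - y c'\<bar> < e} \<subseteq> s"
      using e(2) unfolding s(1) by (auto simp: dist_real_def abs_minus_commute subset_iff)
    moreover have "finite {c}" "{c} \<subseteq> C" using s(2) by auto
    ultimately show ?case using e(1) by blast
  qed
qed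

lemma exists_point:
  fixes B :: "('a::topological_space \<Rightarrow> real) set"
  assumes cpt: "compact (UNIV :: 'a set)" and s: "subalgebra B"
    and cont: "\<forall>b\<in>B. continuous_on UNIV b"
    and y: "y \<in> Ytop B closure_of (m B ` UNIV)"
  shows "\<exists>x0. \<forall>b\<in>B. y b = b x0"
proof (rule ccontr)
  assume "\<not> ?thesis"
  then have "\<forall>x. \<exists>b\<in>B. y b \<noteq> b x" by blast
  then obtain bb where bb: "\<And>x. bb x \<in> B" "\<And>x. y (bb x) \<noteq> bb x x" by metis
  define r where "r x = \<bar>bb x x - y (bb x)\<bar> / 2" for x
  have rpos: "r x > 0" for x using bb(2)[of x] unfolding r_def by auto
  define U where "U x = {x'. r x < \<bar>bb x x' - y (bb x)\<bar>}" for x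
  have opnU: "open (U x)" for x unfolding U_def
    apply (rule open_Collect_less)
    using cont bb(1) by (auto intro!: continuous_intros)
  have cov: "UNIV \<subseteq> (\<Union>x\<in>UNIV. U x)"
  proof
    fix x' :: 'a
    have "r x' < \<bar>bb x' x' - y (bb x')\<bar>" using rpos[of x'] unfolding r_def by (auto simp: field_simps)
    then have "x' \<in> U x'" unfolding U_def by simp
    then show "x' \<in> (\<Union>x\<in>UNIV. U x)" by blast
  qed
  obtain C' where C': "finite C'" "UNIV \<subseteq> (\<Union>x\<in>C'. U x)"
    using compactE_image[OF cpt, where C=UNIV and f=U] opnU cov by metis
  then have ne: "C' \<noteq> {}" by auto
  define e where "e = Min (r ` C')"
  have epos: "e > 0" unfolding e_def using C' ne rpos by auto
  have ele: "x \<in> C' \<Longrightarrow> e \<le> r x" for x unfolding e_def using C' by auto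
  define N where "N = {z \<in> Y B. \<forall>c\<in>bb ` C'. \<bar>z c - y c\<bar> < e}"
  have oN: "openin (Ytop B) N" unfolding N_def
    by (rule Ytop_finite[OF s]) (use C' bb(1) in auto)
  have "y \<in> topspace (Ytop B)" using y by (rule closure_of_top)
  then have yY: "y \<in> Y B" by (simp add: Ytop_topspace[OF s])
  then have yN: "y \<in> N" unfolding N_def using epos by auto
  obtain w where w: "w \<in> m B ` UNIV" "w \<in> N"
    using closure_ofD[OF y yN oN] by blast
  then obtain x' where x': "w = m B x'" by blast
  from C' obtain x where x: "x \<in> C'" "x' \<in> U x" by blast
  have "\<bar>bb x x' - y (bb x)\<bar> < e"
    using w(2) x(1) bb(1)[of x] unfolding N_def x' by (auto simp: m_eval)
  moreover have "r x < \<bar>bb x x' - y (bb x)\<bar>" using x(2) unfolding U_def by auto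
  ultimately show False using ele[OF x(1)] by (meson less_le_trans less_trans order_less_irrefl)
qed

theorem proposition3p5:
  fixes B Q :: "('a::topological_space \<Rightarrow> real) set" and q :: "'a \<Rightarrow> real"
  assumes "compact (UNIV :: 'a set)"
    and "subalgebra B"
    and "\<forall>b\<in>B. continuous_on UNIV b"
    and "quadratic_module B Q"
    and "K_X Q = UNIV"
    and "Ytop B closure_of (m B ` UNIV) = K_Y B Q"
    and "q \<in> B"
    and "{x. q x = 0} \<subseteq> closure {x. q x < 0}"
  shows "let f = (indicator {x. q x \<ge> 0} :: 'a \<Rightarrow> real);
             A = alg_generated (insert f B);
             Q' = qm_generated A (Q \<union> {(\<lambda>x. q x * f x), (\<lambda>x. q x * (f x - 1))})
         in K_X Q' = UNIV \<and> Ytop A closure_of (m A ` UNIV) = K_Y A Q'"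
proof -
  note cpt = assms(1) and sB = assms(2) and cont = assms(3) and qmQ = assms(4)
    and KQ = assms(5) and clB = assms(6) and qB = assms(7) and qcl = assms(8)
  define f where "f = (indicator {x. q x \<ge> 0} :: 'a \<Rightarrow> real)"
  define A where "A = alg_generated (insert f B)"
  define G where "G = Q \<union> {(\<lambda>x. q x * f x), (\<lambda>x. q x * (f x - 1))}"
  define Q' where "Q' = qm_generated A G"
  have fx: "f x = (if q x \<ge> 0 then 1 else 0)" for x unfolding f_def by (simp add: indicator_def)
  have sA: "subalgebra A" unfolding A_def by (rule alg_gen_sub)
  have BA: "B \<subseteq> A" and fA: "f \<in> A" unfolding A_def using alg_gen_sup by blast+
  have qA: "q \<in> A" using qB BA by blast
  have QB: "Q \<subseteq> B" using qmQ unfolding quadratic_module_def by blast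
  have qfA: "(\<lambda>x. q x * f x) \<in> A" by (rule subalg_mult[OF sA qA fA])
  have eqf1: "(\<lambda>x. q x * (f x - 1)) = (\<lambda>x. (\<lambda>x. q x * f x) x + (\<lambda>x. (-1) * q x) x)"
    by (simp add: algebra_simps)
  have qf1A: "(\<lambda>x. q x * (f x - 1)) \<in> A"
    unfolding eqf1 by (rule subalg_add[OF sA qfA subalg_scal[OF sA qA]])
  have GA: "G \<subseteq> A" unfolding G_def using QB BA qfA qf1A by blast
  have Q'A: "Q' \<subseteq> A" unfolding Q'_def by (rule qm_gen_least[OF subalg_qm[OF sA] GA])
  have GQ': "G \<subseteq> Q'" unfolding Q'_def by (rule qm_gen_sup)
  have Qnn: "g \<in> Q \<Longrightarrow> g x \<ge> 0" for g x using KQ unfolding K_X_def by blast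
  have qmP: "quadratic_module A {g \<in> A. \<forall>x. g x \<ge> 0}"
    unfolding quadratic_module_def
  proof (intro conjI ballI)
    show "{g \<in> A. \<forall>x. 0 \<le> g x} \<subseteq> A" by blast
  next
    fix g h assume g: "g \<in> {g \<in> A. \<forall>x. 0 \<le> g x}" and h: "h \<in> {g \<in> A. \<forall>x. 0 \<le> g x}"
    have "(\<lambda>x. g x + h x) \<in> A" using g h subalg_add[OF sA] by blast
    moreover have "\<forall>x. 0 \<le> g x + h x" using g h by (simp add: add_nonneg_nonneg)
    ultimately show "(\<lambda>x. g x + h x) \<in> {g \<in> A. \<forall>x. 0 \<le> g x}" by simp
  next
    fix c g assume c: "c \<in> A" and g: "g \<in> {g \<in> A. \<forall>x. 0 \<le> g x}"
    have "(\<lambda>x. (c x)\<^sup>2 * g x) \<in> A" using g subalg_sq[OF sA c] by blast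
    moreover have "\<forall>x. 0 \<le> (c x)\<^sup>2 * g x" using g by (simp add: mult_nonneg_nonneg)
    ultimately show "(\<lambda>x. (c x)\<^sup>2 * g x) \<in> {g \<in> A. \<forall>x. 0 \<le> g x}" by simp
  next
    show "(\<lambda>_. 1) \<in> {g \<in> A. \<forall>x. 0 \<le> g x}" using subalg_const[OF sA] by simp
  qed
  have nnqf: "0 \<le> q x * f x" for x by (cases "q x \<ge> 0") (auto simp: fx)
  have nnqf1: "0 \<le> q x * (f x - 1)" for x by (cases "q x \<ge> 0") (auto simp: fx)
  have "G \<subseteq> {g \<in> A. \<forall>x. g x \<ge> 0}"
  proof
    fix g assume g: "g \<in> G"
    then have "g \<in> A" using GA by blast
    moreover have "\<forall>x. g x \<ge> 0" using g Qnn nnqf nnqf1 unfolding G_def by auto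
    ultimately show "g \<in> {g \<in> A. \<forall>x. g x \<ge> 0}" by simp
  qed
  then have nn: "g \<in> Q' \<Longrightarrow> g x \<ge> 0" for g x
    using qm_gen_least[OF qmP] unfolding Q'_def by blast
  have part1: "K_X Q' = UNIV" unfolding K_X_def using nn by blast
  have topA: "topspace (Ytop A) = Y A" by (rule Ytop_topspace[OF sA])
  have sub1: "Ytop A closure_of (m A ` UNIV) \<subseteq> K_Y A Q'"
  proof
    fix z assume z: "z \<in> Ytop A closure_of (m A ` UNIV)"
    then have "z \<in> topspace (Ytop A)" by (rule closure_of_top)
    then have zY: "z \<in> Y A" using topA by simp
    have "z g \<ge> 0" if g: "g \<in> Q'" for g
    proof (rule ccontr)
      assume "\<not> z g \<ge> 0"
      have gA: "g \<in> A" using g Q'A by blast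
      have zin: "z \<in> {w \<in> Y A. w g \<in> {..<0}}" using zY \<open>\<not> z g \<ge> 0\<close> by auto
      have oo: "openin (Ytop A) {w \<in> Y A. w g \<in> {..<0}}"
        by (rule Ytop_basic[OF gA]) simp
      obtain w where "w \<in> m A ` UNIV" "w \<in> {w \<in> Y A. w g \<in> {..<0}}"
        using closure_ofD[OF z zin oo] by blast
      then obtain x where "m A x g < 0" by auto
      then have "g x < 0" using m_eval[OF gA] by simp
      then show False using nn[OF g] by (meson not_le)
    qed
    then show "z \<in> K_Y A Q'" unfolding K_Y_def using zY by simp
  qed
  have sub2: "K_Y A Q' \<subseteq> Ytop A closure_of (m A ` UNIV)"
  proof
    fix y assume y: "y \<in> K_Y A Q'"
    then have yY: "y \<in> Y A" and ynn: "\<And>g. g \<in> Q' \<Longrightarrow> y g \<ge> 0" unfolding K_Y_def by auto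
    define y' where "y' = restrict y B"
    have "y' \<in> Y B" unfolding Y_def y'_def
      using yY BA subalg_const[OF sB, of 1] subalg_add[OF sB] subalg_mult[OF sB] subalg_scal[OF sB]
      by (auto simp: Y_one Y_add Y_mult Y_scal subset_iff)
    moreover have "\<forall>g\<in>Q. y' g \<ge> 0" unfolding y'_def using QB GQ' ynn unfolding G_def by auto
    ultimately have "y' \<in> K_Y B Q" unfolding K_Y_def by blast
    then have "y' \<in> Ytop B closure_of (m B ` UNIV)" using clB by simp
    then obtain x0 where "\<forall>b\<in>B. y' b = b x0" using exists_point[OF cpt sB cont] by blast
    then have yB: "\<And>b. b \<in> B \<Longrightarrow> y b = b x0" unfolding y'_def by auto
    have "y f = y f * y f"
    proof -
      have "y (\<lambda>x. f x * f x) = y f * y f" by (rule Y_mult[OF yY fA fA])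
      moreover have "(\<lambda>x. f x * f x) = f" by (auto simp: fx)
      ultimately show ?thesis by simp
    qed
    then have yf01: "y f = 0 \<or> y f = 1" by (metis mult_cancel_right1 mult_eq_0_iff)
    have yqf: "y (\<lambda>x. q x * f x) = q x0 * y f" using Y_mult[OF yY qA fA] yB[OF qB] by simp
    have e1: "y (\<lambda>x. q x * (f x - 1)) = y (\<lambda>x. q x * f x) + y (\<lambda>x. (-1) * q x)"
      unfolding eqf1 by (rule Y_add[OF yY qfA subalg_scal[OF sA qA]])
    have e2: "y (\<lambda>x. (-1) * q x) = (-1) * q x0"
      by (subst Y_scal[OF yY qA]) (simp add: yB[OF qB])
    have yqf1: "y (\<lambda>x. q x * (f x - 1)) = q x0 * (y f - 1)"
      unfolding e1 e2 yqf by (simp add: algebra_simps)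
    have n1: "q x0 * y f \<ge> 0" using ynn GQ' yqf unfolding G_def by force
    have n2: "q x0 * (y f - 1) \<ge> 0" using ynn GQ' yqf1 unfolding G_def by force
    show "y \<in> Ytop A closure_of (m A ` UNIV)"
    proof (cases "y f = f x0")
      case True
      define S1 where "S1 = {a \<in> A. y a = a x0}"
      have "subalgebra S1" unfolding subalgebra_def S1_def
        using sA Y_const[OF yY sA] Y_add[OF yY] Y_mult[OF yY] Y_scal[OF yY]
        by (auto intro: subalg_add subalg_mult subalg_const subalg_scal)
      moreover have "insert f B \<subseteq> S1" unfolding S1_def using True fA BA yB by auto
      ultimately have "A \<subseteq> S1" unfolding A_def by (rule alg_gen_least)
      then have "\<forall>a\<in>A. y a = m A x0 a"
      proof (intro ballI)
        fix a assume a: "a \<in> A"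
        assume "A \<subseteq> S1"
        then have "y a = a x0" using a unfolding S1_def by blast
        then show "y a = m A x0 a" using m_eval[OF a] by simp
      qed
      moreover have "y \<in> extensional A" using yY unfolding Y_def by blast
      ultimately have "y = m A x0" unfolding m_def
        by (intro extensionalityI[of _ A]) auto
      then show ?thesis unfolding closure_of_def using yY topA by auto
    next
      case False
      have q0: "q x0 = 0" and yf0: "y f = 0"
        using False yf01 n1 n2 by (auto simp: fx split: if_splits)
      define S2 where "S2 = {a \<in> A. \<exists>b\<in>B. (\<forall>x. q x < 0 \<longrightarrow> a x = b x) \<and> y a = b x0}"
      have "subalgebra S2" unfolding subalgebra_def
      proof (intro conjI ballI allI)
        fix r :: real show "(\<lambda>_. r) \<in> S2" unfolding S2_def
          using subalg_const[OF sA] subalg_const[OF sB] Y_const[OF yY sA] by fastforce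
      next
        fix a b assume a: "a \<in> S2" and b: "b \<in> S2"
        then obtain ba bb where ba: "ba \<in> B" "\<forall>x. q x < 0 \<longrightarrow> a x = ba x" "y a = ba x0"
          and bb: "bb \<in> B" "\<forall>x. q x < 0 \<longrightarrow> b x = bb x" "y b = bb x0" and aA: "a \<in> A" and bA: "b \<in> A"
          unfolding S2_def by blast
        show "(\<lambda>x. a x + b x) \<in> S2" unfolding S2_def
          using ba bb aA bA subalg_add[OF sA aA bA] subalg_add[OF sB ba(1) bb(1)] Y_add[OF yY aA bA]
          by (intro CollectI conjI bexI[of _ "\<lambda>x. ba x + bb x"]) auto
        show "(\<lambda>x. a x * b x) \<in> S2" unfolding S2_def
          using ba bb aA bA subalg_mult[OF sA aA bA] subalg_mult[OF sB ba(1) bb(1)] Y_mult[OF yY aA bA]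
          by (intro CollectI conjI bexI[of _ "\<lambda>x. ba x * bb x"]) auto
      next
        fix r :: real and a assume a: "a \<in> S2"
        then obtain ba where ba: "ba \<in> B" "\<forall>x. q x < 0 \<longrightarrow> a x = ba x" "y a = ba x0"
          and aA: "a \<in> A" unfolding S2_def by blast
        show "(\<lambda>x. r * a x) \<in> S2" unfolding S2_def
          using ba aA subalg_scal[OF sA aA] subalg_scal[OF sB ba(1)] Y_scal[OF yY aA]
          by (intro CollectI conjI bexI[of _ "\<lambda>x. r * ba x"]) auto
      qed
      moreover have "insert f B \<subseteq> S2"
      proof -
        have "f \<in> S2" unfolding S2_def
          using fA yf0 subalg_const[OF sB, of 0] by (auto simp: fx intro!: bexI[of _ "\<lambda>_. 0"])
        moreover have "B \<subseteq> S2" unfolding S2_def using BA yB by blast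
        ultimately show ?thesis by blast
      qed
      ultimately have AS2: "A \<subseteq> S2" unfolding A_def by (rule alg_gen_least)
      show ?thesis unfolding closure_of_def
      proof (intro CollectI conjI allI impI)
        show "y \<in> topspace (Ytop A)" using yY topA by simp
      next
        fix T assume T: "y \<in> T \<and> openin (Ytop A) T"
        then obtain F e where Fe: "finite F" "F \<subseteq> A" "e > 0" "{z \<in> Y A. \<forall>c\<in>F. \<bar>z c - y c\<bar> < e} \<subseteq> T"
          using Ytop_nbhd[of A T y] by blast
        have "\<forall>c\<in>F. \<exists>b\<in>B. (\<forall>x. q x < 0 \<longrightarrow> c x = b x) \<and> y c = b x0"
        proof
          fix c assume "c \<in> F"
          then have "c \<in> S2" using Fe(2) AS2 by blast
          then show "\<exists>b\<in>B. (\<forall>x. q x < 0 \<longrightarrow> c x = b x) \<and> y c = b x0" unfolding S2_def by simp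
        qed
        then obtain bF where bF: "\<And>c. c \<in> F \<Longrightarrow> bF c \<in> B \<and> (\<forall>x. q x < 0 \<longrightarrow> c x = bF c x) \<and> y c = bF c x0"
          using bchoice[of F "\<lambda>c b. b \<in> B \<and> (\<forall>x. q x < 0 \<longrightarrow> c x = b x) \<and> y c = b x0"] by blast
        define V where "V = (\<Inter>c\<in>F. {x. \<bar>bF c x - bF c x0\<bar> < e})"
        have ov: "open V" unfolding V_def
        proof (rule open_INT[OF Fe(1)], rule ballI)
          fix c assume "c \<in> F"
          then have "bF c \<in> B" using bF by blast
          then have "continuous_on UNIV (bF c)" using cont by blast
          then show "open {x. \<bar>bF c x - bF c x0\<bar> < e}"
            by (intro open_Collect_less) (auto intro!: continuous_intros)
        qed
        have x0V: "x0 \<in> V" unfolding V_def using Fe(3) by auto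
        have "x0 \<in> closure {x. q x < 0}" using qcl q0 by blast
        then have "\<forall>A. \<forall>S\<subseteq>A. open S \<longrightarrow> x0 \<in> S \<longrightarrow> {x. q x < 0} \<inter> A \<noteq> {}"
          by (simp only: closure_iff_nhds_not_empty)
        then have "{x. q x < 0} \<inter> V \<noteq> {}" using ov x0V by blast
        then obtain x where x: "q x < 0" "x \<in> V" by blast
        have "m A x \<in> {z \<in> Y A. \<forall>c\<in>F. \<bar>z c - y c\<bar> < e}"
        proof (intro CollectI conjI ballI)
          show "m A x \<in> Y A" by (rule m_in_Y[OF sA])
        next
          fix c assume c: "c \<in> F"
          have cA: "c \<in> A" using c Fe(2) by blast
          have bc: "bF c \<in> B \<and> (\<forall>x. q x < 0 \<longrightarrow> c x = bF c x) \<and> y c = bF c x0" using bF[OF c] .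
          have "m A x c = bF c x" using m_eval[OF cA] bc x(1) by simp
          moreover have "\<bar>bF c x - bF c x0\<bar> < e" using x(2) c unfolding V_def by blast
          ultimately show "\<bar>m A x c - y c\<bar> < e" using bc by simp
        qed
        then show "\<exists>w\<in>m A ` UNIV. w \<in> T" using Fe(4) by blast
      qed
    qed
  qed
  have main: "K_X Q' = UNIV \<and> Ytop A closure_of (m A ` UNIV) = K_Y A Q'"
    using part1 sub1 sub2 by blast
  show ?thesis using main unfolding Let_def f_def A_def G_def Q'_def .
qed

end
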